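(* Let $T=T(n,a,b)$ with $a\ge 0$, $b\ge a+2$ and $2(a+b)<n-1$, let $\ell=n-a-b$, $p=\lfloor\frac{\ell}{2}\rfloor$, $p_1=\lceil\frac{\ell}{2}\rceil$ and $x=x(T)$. Suppose $b<\frac{\ell}{2}$. Then (i) $x_{v_p}>x_{v_{p_1+1}}$; (ii) if $a\ge1$, then $x_{v_i}>x_{v_{\ell+1-i}}$ and $x_{w_i}>x_{w_{\ell-i}}$ for $i=1,\dots,a$; and $x_{v_{a+1}}>x_{v_{\ell-a}}$.
   Context: Hypergraphs have edges that are vertex subsets of size at least two; distance $d_T(u,v)$ in a hypertree is the length of a shortest loose path (an alternating sequence of distinct vertices and distinct edges $(v_0,e_1,v_1,\dots,e_p,v_p)$ with $v_{i-1},v_i\in e_i$ and non-consecutive edges disjoint). $D(T)$ is the distance matrix, $\rho(T)$ its largest eigenvalue, and $x(T)$ the unit positive eigenvector for $\rho(T)$ (distance Perron vector), with entries $x_v$ indexed by vertices. For integers $n,a,b$ with $0\le a\le b$ and $a+b\le\lfloor\frac{n-1}{2}\rfloor$, put $\ell=n-a-b$ and $I=\{1,\dots,a\}\cup\{\ell-b,\dots,\ell-1\}$; $T(n,a,b)$ is the hypertree with vertex set $\{v_1,\dots,v_\ell\}\cup\{w_i:i\in I\}$ and edges $\{v_i,w_i,v_{i+1}\}$ for $i\in I$ and $\{v_i,v_{i+1}\}$ for $i\in\{1,\dots,\ell-1\}\setminus I$. *)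

theory Defs
  imports Complex_Main
begin

text \<open>It is represented by the vertex list vs (length p+1) and the edge
 list es (length p), where es!i plays the role of e_(i+1).\<close>

definition loose_path :: "'a set set \<Rightarrow> 'a list \<Rightarrow> 'a set list \<Rightarrow> bool" where
  "loose_path E vs es \<longleftrightarrow>
     length vs = Suc (length es) \<and> distinct vs \<and> distinct es \<and> set es \<subseteq> E \<and>
     (\<forall>i < length es. vs ! i \<in> es ! i \<and> vs ! Suc i \<in> es ! i) \<and>
     (\<forall>i j. i < length es \<and> j < length es \<and> Suc i < j \<longrightarrow> es ! i \<inter> es ! j = {})"

definition hdist :: "'a set set \<Rightarrow> 'a \<Rightarrow> 'a \<Rightarrow> nat" where
  "hdist E u v = (LEAST p. \<exists>vs es. loose_path E vs es \<and> length es = p \<and>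
                               hd vs = u \<and> last vs = v)"

definition dist_eigenvalues :: "'a set \<Rightarrow> 'a set set \<Rightarrow> real set" where
  "dist_eigenvalues V E = {r. \<exists>x :: 'a \<Rightarrow> real. (\<exists>u\<in>V. x u \<noteq> 0) \<and>
      (\<forall>u\<in>V. (\<Sum>w\<in>V. real (hdist E u w) * x w) = r * x u)}"

definition dist_spectral_radius :: "'a set \<Rightarrow> 'a set set \<Rightarrow> real" where
  "dist_spectral_radius V E = Max (dist_eigenvalues V E)"

definition dist_perron_vector :: "'a set \<Rightarrow> 'a set set \<Rightarrow> ('a \<Rightarrow> real) \<Rightarrow> bool" where
  "dist_perron_vector V E x \<longleftrightarrow>
     (\<forall>u\<in>V. x u > 0) \<and> (\<Sum>u\<in>V. (x u)\<^sup>2) = 1 \<and>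
     (\<forall>u\<in>V. (\<Sum>w\<in>V. real (hdist E u w) * x w) = dist_spectral_radius V E * x u)"

datatype tvtx = Vv nat | Wv nat   \<comment> \<open>Vv i = v_i, Wv i = w_i\<close>

definition Tlen :: "nat \<Rightarrow> nat \<Rightarrow> nat \<Rightarrow> nat" where
  "Tlen n a b = n - a - b"

definition Tidx :: "nat \<Rightarrow> nat \<Rightarrow> nat \<Rightarrow> nat set" where
  "Tidx n a b = {1..a} \<union> {Tlen n a b - b .. Tlen n a b - 1}"

definition T_verts :: "nat \<Rightarrow> nat \<Rightarrow> nat \<Rightarrow> tvtx set" where
  "T_verts n a b = Vv ` {1..Tlen n a b} \<union> Wv ` Tidx n a b"

definition T_edges :: "nat \<Rightarrow> nat \<Rightarrow> nat \<Rightarrow> tvtx set set" where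
  "T_edges n a b = (\<lambda>i. if i \<in> Tidx n a b then {Vv i, Wv i, Vv (Suc i)} else {Vv i, Vv (Suc i)})
                      ` {1..<Tlen n a b}"

end

theory Submission
  imports Defs
begin


fun pos :: "tvtx \<Rightarrow> nat" where
  "pos (Vv i) = 2*i" | "pos (Wv i) = 2*i+1"

definition dd :: "nat \<Rightarrow> nat \<Rightarrow> nat" where
  "dd p q = (if p = q then 0 else ((if p < q then q - p else p - q) + p mod 2 + q mod 2) div 2)"

lemma dd_sym: "dd p q = dd q p"
  unfolding dd_def by auto

lemma dd_refl[simp]: "dd p p = 0"
  unfolding dd_def by auto

lemma dd_step:
  assumes "ps \<in> {2*k, 2*k+1, 2*k+2}" "pt \<in> {2*k, 2*k+1, 2*k+2}"
  shows "dd ps c \<le> dd pt c + 1"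
  using assms unfolding dd_def by (auto; presburger)

lemma pos_inj: "inj pos"
proof (rule injI)
  fix u v assume "pos u = pos v" then show "u = v"
    by (cases u; cases v; auto; presburger)
qed

definition edg :: "nat \<Rightarrow> nat \<Rightarrow> nat \<Rightarrow> nat \<Rightarrow> tvtx set" where
  "edg n a b k = (if k \<in> Tidx n a b then {Vv k, Wv k, Vv (Suc k)} else {Vv k, Vv (Suc k)})"

lemma T_edges_edg: "T_edges n a b = edg n a b ` {1..<Tlen n a b}"
  unfolding T_edges_def edg_def by simp

lemma pos_edg: "s \<in> edg n a b k \<Longrightarrow> pos s \<in> {2*k, 2*k+1, 2*k+2}"
  unfolding edg_def by (auto split: if_splits)

lemma Vv_in_edg: "Vv j \<in> edg n a b k \<longleftrightarrow> j = k \<or> j = Suc k"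
  unfolding edg_def by auto

lemma edg_inj: "inj (edg n a b)"
proof (rule injI)
  fix k k' assume "edg n a b k = edg n a b k'"
  moreover have "Vv k \<in> edg n a b k" "Vv (Suc k) \<in> edg n a b k" by (simp_all add: Vv_in_edg)
  ultimately have "Vv k \<in> edg n a b k'" "Vv (Suc k) \<in> edg n a b k'" by auto
  then show "k = k'" unfolding Vv_in_edg by auto
qed

lemma edg_disj: "Suc k < k' \<Longrightarrow> edg n a b k \<inter> edg n a b k' = {}"
  unfolding edg_def by auto

lemma chain_dd:
  assumes "\<forall>i. Suc i < length vs \<longrightarrow> (\<exists>k. pos (vs!i) \<in> {2*k,2*k+1,2*k+2} \<and> pos (vs!Suc i) \<in> {2*k,2*k+1,2*k+2})"
    and "vs \<noteq> []"
  shows "dd (pos (hd vs)) c \<le> dd (pos (last vs)) c + (length vs - 1)"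
  using assms
proof (induction vs)
  case Nil then show ?case by simp
next
  case (Cons y ys)
  show ?case
  proof (cases "ys = []")
    case True then show ?thesis by simp
  next
    case False
    have h1: "\<forall>i. Suc i < length ys \<longrightarrow> (\<exists>k. pos (ys!i) \<in> {2*k,2*k+1,2*k+2} \<and> pos (ys!Suc i) \<in> {2*k,2*k+1,2*k+2})"
    proof (intro allI impI)
      fix i assume "Suc i < length ys"
      then have "Suc (Suc i) < length (y#ys)" by simp
      with Cons.prems(1) show "\<exists>k. pos (ys!i) \<in> {2*k,2*k+1,2*k+2} \<and> pos (ys!Suc i) \<in> {2*k,2*k+1,2*k+2}"
        by (metis nth_Cons_Suc)
    qed
    have IH: "dd (pos (hd ys)) c \<le> dd (pos (last ys)) c + (length ys - 1)"
      using Cons.IH[OF h1 False] .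
    from Cons.prems(1)[rule_format, of 0] False obtain k where "pos ((y#ys)!0) \<in> {2*k,2*k+1,2*k+2}" "pos ((y#ys)!Suc 0) \<in> {2*k,2*k+1,2*k+2}"
      by auto
    then have "dd (pos y) c \<le> dd (pos (hd ys)) c + 1"
      using dd_step False by (simp add: hd_conv_nth)
    with IH False show ?thesis by (cases ys) auto
  qed
qed

lemma loose_path_rev:
  assumes "loose_path E vs es" shows "loose_path E (rev vs) (rev es)"
proof -
  have L: "length vs = Suc (length es)" and D: "distinct vs" "distinct es" and S: "set es \<subseteq> E"
    and M: "\<forall>i < length es. vs ! i \<in> es ! i \<and> vs ! Suc i \<in> es ! i"
    and J: "\<forall>i j. i < length es \<and> j < length es \<and> Suc i < j \<longrightarrow> es ! i \<inter> es ! j = {}"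
    using assms unfolding loose_path_def by auto
  have M': "rev vs ! i \<in> rev es ! i \<and> rev vs ! Suc i \<in> rev es ! i" if "i < length es" for i
  proof -
    define j where "j = length es - Suc i"
    have j: "j < length es" using that unfolding j_def by simp
    have "rev es ! i = es ! j" using that by (simp add: rev_nth j_def)
    moreover have "rev vs ! i = vs ! Suc j" using that L by (simp add: rev_nth j_def Suc_diff_Suc)
    moreover have "rev vs ! Suc i = vs ! j" using that L by (simp add: rev_nth j_def)
    ultimately show ?thesis using M j by auto
  qed
  have J': "rev es ! i \<inter> rev es ! j = {}" if "i < length es" "j < length es" "Suc i < j" for i j
  proof -
    have "rev es ! i = es ! (length es - Suc i)" "rev es ! j = es ! (length es - Suc j)"
      using that by (simp_all add: rev_nth)
    moreover have "es ! (length es - Suc j) \<inter> es ! (length es - Suc i) = {}"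
    proof -
      have "Suc (length es - Suc j) < length es - Suc i" "length es - Suc j < length es"
        "length es - Suc i < length es" using that by linarith+
      then show ?thesis using J by blast
    qed
    ultimately show ?thesis by auto
  qed
  show ?thesis unfolding loose_path_def using L D S M' J' by auto
qed


lemma dd_ee: "dd (2*i) (2*t) = (if i \<le> t then t - i else i - t)"
  unfolding dd_def by (auto simp: diff_mult_distrib2[symmetric])
lemma dd_eo: "dd (2*i) (2*t+1) = (if i \<le> t then t - i + 1 else i - t)"
  unfolding dd_def by auto
lemma dd_oe: "dd (2*i+1) (2*t) = (if i < t then t - i else i - t + 1)"
  unfolding dd_def by auto
lemma dd_oo: "dd (2*i+1) (2*t+1) = (if i = t then 0 else if i < t then t - i + 1 else i - t + 1)"
  unfolding dd_def by auto

lemma q_cases: fixes q :: nat obtains t where "q = 2*t" | t where "q = 2*t+1"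
proof (cases "even q")
  case True then show ?thesis using that(1) by (auto elim: evenE)
next
  case False then show ?thesis using that(2) by (auto elim: oddE)
qed

lemma two_neq_odd[simp]: "(2*t::nat) \<noteq> Suc (2*j)"
  by presburger

lemma coef1: "int (dd (2*i) q) - int (dd (2*i+2) q) = (if q < 2*i+1 then -1 else if q = 2*i+1 then 0 else 1)"
proof -
  have e: "2*i+2 = 2*(i+1)" by simp
  show ?thesis
  proof (cases q rule: q_cases)
    case (1 t) show ?thesis unfolding e 1 dd_ee by simp
  next
    case (2 t) show ?thesis unfolding e 2 dd_eo by simp
  qed
qed
lemma coef2: "int (dd (2*j+1) q) - int (dd (2*j) q) = (if q < 2*j+1 then 1 else if q = 2*j+1 then -1 else 0)"
proof (cases q rule: q_cases)
  case (1 t) show ?thesis unfolding 1 dd_ee dd_oe by simp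
next
  case (2 t) show ?thesis unfolding 2 dd_eo dd_oo by simp
qed
lemma coef3: "int (dd (2*j+1) q) - int (dd (2*j+2) q) = (if q < 2*j+1 then 0 else if q = 2*j+1 then -1 else 1)"
proof -
  have e: "2*j+2 = 2*(j+1)" by simp
  show ?thesis
  proof (cases q rule: q_cases)
    case (1 t) show ?thesis unfolding e 1 dd_ee dd_oe by simp
  next
    case (2 t) show ?thesis unfolding e 2 dd_eo dd_oo by simp
  qed
qed


locale TT =
  fixes n a b :: nat
  assumes hb: "a + 2 \<le> b" and hbl: "2*b < Tlen n a b"
begin

abbreviation "l \<equiv> Tlen n a b"
abbreviation "I \<equiv> Tidx n a b"
abbreviation "V \<equiv> T_verts n a b"
abbreviation "E \<equiv> T_edges n a b"
abbreviation "ed \<equiv> edg n a b"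

lemma I_eq: "j \<in> I \<longleftrightarrow> (1 \<le> j \<and> j \<le> a) \<or> (l - b \<le> j \<and> j \<le> l - 1)"
  unfolding Tidx_def by auto

lemma I_sub: "j \<in> I \<Longrightarrow> 1 \<le> j \<and> j < l"
  using hb hbl unfolding I_eq by auto

lemma Vv_in_V: "Vv j \<in> V \<longleftrightarrow> 1 \<le> j \<and> j \<le> l"
  unfolding T_verts_def by auto

lemma Wv_in_V: "Wv j \<in> V \<longleftrightarrow> j \<in> I"
  unfolding T_verts_def by auto

lemma finite_V: "finite V"
  unfolding T_verts_def Tidx_def by auto

lemma V_pos: "u \<in> V \<Longrightarrow> 2 \<le> pos u \<and> pos u \<le> 2*l"
  by (cases u) (auto simp: Vv_in_V Wv_in_V dest: I_sub)

lemma path_exists: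
  assumes u: "u \<in> V" and z: "z \<in> V" and lt: "pos u < pos z"
  shows "\<exists>vs es. loose_path E vs es \<and> length es = dd (pos u) (pos z) \<and> hd vs = u \<and> last vs = z"
proof -
  define i0 where "i0 = pos u div 2"
  define ev where "ev = (pos z + 1) div 2"
  define m where "m = ev - i0"
  define g where "g k = (if k = 0 then u else if k = m then z else Vv (i0 + k))" for k
  define vs where "vs = map g [0..<Suc m]"
  define es where "es = map (\<lambda>k. ed (i0 + k)) [0..<m]"
  have uu: "(u = Vv i0 \<and> 1 \<le> i0 \<and> i0 \<le> l) \<or> (u = Wv i0 \<and> i0 \<in> I)"
    using u unfolding i0_def by (cases u) (auto simp: Vv_in_V Wv_in_V)
  have zz: "(z = Vv ev \<and> 1 \<le> ev \<and> ev \<le> l) \<or> (z = Wv (ev - 1) \<and> ev - 1 \<in> I \<and> ev \<ge> 1)"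
    using z unfolding ev_def by (cases z) (auto simp: Vv_in_V Wv_in_V)
  have i0: "1 \<le> i0" using uu I_sub by auto
  have evl: "ev \<le> l" using zz I_sub by force
  have i0ev: "i0 < ev" using lt unfolding i0_def ev_def by linarith
  have m0: "0 < m" using i0ev unfolding m_def by simp
  have mdd: "m = dd (pos u) (pos z)"
    using lt unfolding m_def i0_def ev_def dd_def by (cases u; cases z; simp; presburger)
  have posg: "pos (g k) < pos (g k')" if "k < k'" "k' \<le> m" for k k'
  proof -
    have pu: "pos u \<le> 2*i0 + 1" unfolding i0_def by simp
    have pz: "pos z \<ge> 2*ev - 1" unfolding ev_def by simp
    show ?thesis using that pu pz lt m0 unfolding g_def m_def by auto
  qed
  have inj: "inj_on g {0..m}"
  proof (rule inj_onI)
    fix k k' assume "k \<in> {0..m}" "k' \<in> {0..m}" "g k = g k'"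
    then show "k = k'" using posg[of k k'] posg[of k' k] by (cases "k < k'"; cases "k' < k") auto
  qed
  have dvs: "distinct vs" unfolding vs_def distinct_map using inj
    by (simp del: upt_Suc add: atLeastLessThanSuc_atLeastAtMost)
  have des: "distinct es" unfolding es_def distinct_map
  proof
    show "inj_on (\<lambda>k. ed (i0 + k)) (set [0..<m])"
    proof (rule inj_onI)
      fix k k' assume "ed (i0 + k) = ed (i0 + k')"
      then have "i0 + k = i0 + k'" by (rule injD[OF edg_inj])
      then show "k = k'" by simp
    qed
  qed simp
  have ses: "set es \<subseteq> E" unfolding es_def T_edges_edg using i0 evl m_def by auto
  have mem: "vs ! k \<in> es ! k \<and> vs ! Suc k \<in> es ! k" if "k < m" for k
  proof -
    have "g k \<in> ed (i0 + k)"
      using that uu unfolding g_def edg_def by auto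
    moreover have "g (Suc k) \<in> ed (i0 + k)"
    proof (cases "Suc k = m")
      case True
      then have "i0 + k = ev - 1" "g (Suc k) = z" using m_def i0ev unfolding g_def by auto
      then show ?thesis using zz unfolding edg_def by auto
    next
      case False
      then show ?thesis unfolding g_def edg_def by auto
    qed
    ultimately show ?thesis using that unfolding vs_def es_def
      by (simp del: upt_Suc add: nth_append)
  qed
  have disj: "es ! i \<inter> es ! j = {}" if "i < m" "j < m" "Suc i < j" for i j
    using that edg_disj unfolding es_def by simp
  have "loose_path E vs es"
    unfolding loose_path_def using dvs des ses mem disj
    by (simp add: vs_def es_def del: upt_Suc)
  moreover have "hd vs = u" unfolding vs_def g_def by (simp add: hd_map del: upt_Suc)
  moreover have "last vs = z" unfolding vs_def g_def using m0 by (simp add: last_map del: upt_Suc)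
  moreover have "length es = dd (pos u) (pos z)" unfolding es_def using mdd by simp
  ultimately show ?thesis by blast
qed

lemma path_lower:
  assumes "loose_path E vs es"
  shows "dd (pos (hd vs)) (pos (last vs)) \<le> length es"
proof -
  have L: "length vs = Suc (length es)" and S: "set es \<subseteq> E"
    and M: "\<forall>i < length es. vs ! i \<in> es ! i \<and> vs ! Suc i \<in> es ! i"
    using assms unfolding loose_path_def by auto
  have "\<forall>i. Suc i < length vs \<longrightarrow> (\<exists>k. pos (vs!i) \<in> {2*k,2*k+1,2*k+2} \<and> pos (vs!Suc i) \<in> {2*k,2*k+1,2*k+2})"
  proof (intro allI impI)
    fix i assume "Suc i < length vs"
    then have i: "i < length es" using L by simp
    then have "es ! i \<in> E" using S by auto
    then obtain k where "es ! i = ed k" unfolding T_edges_edg by auto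
    then show "\<exists>k. pos (vs!i) \<in> {2*k,2*k+1,2*k+2} \<and> pos (vs!Suc i) \<in> {2*k,2*k+1,2*k+2}"
      using M i pos_edg by metis
  qed
  moreover have "vs \<noteq> []" using L by auto
  ultimately have "dd (pos (hd vs)) (pos (last vs)) \<le> dd (pos (last vs)) (pos (last vs)) + (length vs - 1)"
    by (rule chain_dd)
  then show ?thesis using L by simp
qed

lemma hdist_eq:
  assumes u: "u \<in> V" and z: "z \<in> V"
  shows "hdist E u z = dd (pos u) (pos z)"
proof -
  have ex: "\<exists>vs es. loose_path E vs es \<and> length es = dd (pos u) (pos z) \<and> hd vs = u \<and> last vs = z"
  proof (cases "pos u = pos z")
    case True
    then have "u = z" using pos_inj by (auto dest: injD)
    moreover have "loose_path E [u] []" unfolding loose_path_def by simp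
    ultimately show ?thesis using True by (intro exI[of _ "[u]"] exI[of _ "[]"]) simp
  next
    case False
    show ?thesis
    proof (cases "pos u < pos z")
      case True then show ?thesis using path_exists u z by blast
    next
      case False2: False
      with False have "pos z < pos u" by simp
      then obtain vs es where "loose_path E vs es" "length es = dd (pos z) (pos u)" "hd vs = z" "last vs = u"
        using path_exists u z by blast
      then show ?thesis using loose_path_rev dd_sym
        by (intro exI[of _ "rev vs"] exI[of _ "rev es"]) (auto simp: hd_rev last_rev)
    qed
  qed
  show ?thesis unfolding hdist_def
  proof (rule Least_equality)
    show "\<exists>vs es. loose_path E vs es \<and> length es = dd (pos u) (pos z) \<and> hd vs = u \<and> last vs = z"
      using ex .
  next
    fix y assume "\<exists>vs es. loose_path E vs es \<and> length es = y \<and> hd vs = u \<and> last vs = z"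
    then show "dd (pos u) (pos z) \<le> y" using path_lower by blast
  qed
qed

end


definition vert :: "nat \<Rightarrow> tvtx" where
  "vert q = (if even q then Vv (q div 2) else Wv (q div 2))"

lemma vert_pos[simp]: "vert (pos u) = u"
  by (cases u) (auto simp: vert_def)

lemma pos_vert[simp]: "pos (vert q) = q"
  by (auto simp: vert_def)

lemma step_sum:
  fixes X :: "nat \<Rightarrow> real"
  assumes "k < K"
  shows "(\<Sum>q<K. (if q < k then \<alpha> else if q = k then \<beta> else \<gamma>) * X q)
       = \<alpha> * (\<Sum>q<k. X q) + \<beta> * X k + \<gamma> * ((\<Sum>q<K. X q) - (\<Sum>q<Suc k. X q))"
  using assms
proof (induction K)
  case 0 then show ?case by simp
next
  case (Suc K)
  show ?case
  proof (cases "k < K")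
    case True
    then show ?thesis using Suc.IH by (simp add: algebra_simps)
  next
    case False
    then have "k = K" using Suc.prems by simp
    then show ?thesis by (simp add: sum_distrib_left)
  qed
qed

locale TX = TT +
  fixes x :: "tvtx \<Rightarrow> real"
  assumes hx: "dist_perron_vector (T_verts n a b) (T_edges n a b) x"
begin

abbreviation "\<rho> \<equiv> dist_spectral_radius V E"

definition X :: "nat \<Rightarrow> real" where
  "X q = (if vert q \<in> V then x (vert q) else 0)"

abbreviation "M \<equiv> 2*l+3"

definition P :: "nat \<Rightarrow> real" where
  "P k = (\<Sum>q<k. X q)"

abbreviation "T \<equiv> P M"

lemma P_Suc: "P (Suc k) = P k + X k"
  unfolding P_def by simp

lemma xpos: "u \<in> V \<Longrightarrow> x u > 0"
  using hx unfolding dist_perron_vector_def by auto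

lemma X_nonneg: "X q \<ge> 0"
  unfolding X_def using xpos by (auto simp: less_imp_le)

lemma X_pos: "u \<in> V \<Longrightarrow> X (pos u) = x u"
  unfolding X_def by simp

lemma eig: "u \<in> V \<Longrightarrow> (\<Sum>w\<in>V. real (dd (pos u) (pos w)) * x w) = \<rho> * x u"
  using hx hdist_eq unfolding dist_perron_vector_def by auto

lemma sumV: "(\<Sum>w\<in>V. g (pos w) * x w) = (\<Sum>q<M. g q * X q)"
proof -
  have "(\<Sum>w\<in>V. g (pos w) * x w) = (\<Sum>w\<in>V. g (pos w) * X (pos w))"
    by (simp add: X_pos)
  also have "\<dots> = (\<Sum>q\<in>pos ` V. g q * X q)"
    by (rule sum.reindex[OF inj_on_subset[OF pos_inj subset_UNIV], symmetric, unfolded comp_def])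
  also have "\<dots> = (\<Sum>q<M. g q * X q)"
  proof (rule sum.mono_neutral_left)
    show "finite {..<M}" by simp
    show "pos ` V \<subseteq> {..<M}" using V_pos by fastforce
    show "\<forall>q\<in>{..<M} - pos ` V. g q * X q = 0"
    proof
      fix q assume "q \<in> {..<M} - pos ` V"
      then have "vert q \<notin> V" by (metis DiffD2 image_eqI pos_vert)
      then show "g q * X q = 0" unfolding X_def by simp
    qed
  qed
  finally show ?thesis .
qed

lemma diff_eq:
  assumes "u \<in> V" "z \<in> V"
  shows "\<rho> * (x u - x z) = (\<Sum>q<M. (real (dd (pos u) q) - real (dd (pos z) q)) * X q)"
proof -
  have "\<rho> * (x u - x z) = (\<Sum>w\<in>V. real (dd (pos u) (pos w)) * x w) - (\<Sum>w\<in>V. real (dd (pos z) (pos w)) * x w)"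
    using eig assms by (simp add: right_diff_distrib)
  also have "\<dots> = (\<Sum>q<M. real (dd (pos u) q) * X q) - (\<Sum>q<M. real (dd (pos z) q) * X q)"
    using sumV[of "\<lambda>q. real (dd (pos u) q)"] sumV[of "\<lambda>q. real (dd (pos z) q)"] by simp
  also have "\<dots> = (\<Sum>q<M. (real (dd (pos u) q) - real (dd (pos z) q)) * X q)"
    by (simp add: sum_subtractf left_diff_distrib)
  finally show ?thesis .
qed

lemma l_ge: "2*a + 5 \<le> l" using hb hbl by linarith

lemma E1:
  assumes "1 \<le> i" "i < l"
  shows "\<rho> * (X (2*i) - X (2*i+2)) = (T - P (2*i+2)) - P (2*i+1)"
proof -
  have V1: "Vv i \<in> V" "Vv (Suc i) \<in> V" using assms by (auto simp: Vv_in_V)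
  have c: "real (dd (2*i) q) - real (dd (2*i+2) q) = (if q < 2*i+1 then -1 else if q = 2*i+1 then 0 else 1)" for q
  proof -
    have "real (dd (2*i) q) - real (dd (2*i+2) q) = real_of_int (int (dd (2*i) q) - int (dd (2*i+2) q))" by simp
    then show ?thesis unfolding coef1 by simp
  qed
  have "\<rho> * (X (2*i) - X (2*i+2)) = \<rho> * (x (Vv i) - x (Vv (Suc i)))"
    using X_pos[OF V1(1)] X_pos[OF V1(2)] by simp
  also have "\<dots> = (\<Sum>q<M. (if q < 2*i+1 then -1 else if q = 2*i+1 then 0 else 1) * X q)"
    using diff_eq[OF V1] c by simp
  also have "\<dots> = (T - P (2*i+2)) - P (2*i+1)"
    using assms step_sum[of "2*i+1" M "-1" 0 1 X] unfolding P_def by simp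
  finally show ?thesis .
qed

lemma E2:
  assumes "j \<in> I"
  shows "\<rho> * (X (2*j+1) - X (2*j)) = P (2*j+1) - X (2*j+1)"
proof -
  have V1: "Wv j \<in> V" "Vv j \<in> V" using assms I_sub[OF assms] by (auto simp: Vv_in_V Wv_in_V)
  have c: "real (dd (2*j+1) q) - real (dd (2*j) q) = (if q < 2*j+1 then 1 else if q = 2*j+1 then -1 else 0)" for q
  proof -
    have "real (dd (2*j+1) q) - real (dd (2*j) q) = real_of_int (int (dd (2*j+1) q) - int (dd (2*j) q))" by simp
    then show ?thesis unfolding coef2 by simp
  qed
  have "\<rho> * (X (2*j+1) - X (2*j)) = \<rho> * (x (Wv j) - x (Vv j))"
    using X_pos[OF V1(1)] X_pos[OF V1(2)] by simp
  also have "\<dots> = (\<Sum>q<M. (if q < 2*j+1 then 1 else if q = 2*j+1 then -1 else 0) * X q)"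
    using diff_eq[OF V1] c by simp
  also have "\<dots> = P (2*j+1) - X (2*j+1)"
  proof -
    have k: "2*j+1 < M" using I_sub[OF assms] by simp
    show ?thesis using step_sum[OF k, of 1 "-1" 0 X] unfolding P_def by simp
  qed
  finally show ?thesis .
qed

lemma E3:
  assumes "j \<in> I"
  shows "\<rho> * (X (2*j+1) - X (2*j+2)) = T - P (2*j+2) - X (2*j+1)"
proof -
  have V1: "Wv j \<in> V" "Vv (Suc j) \<in> V" using assms I_sub[OF assms] by (auto simp: Vv_in_V Wv_in_V)
  have c: "real (dd (2*j+1) q) - real (dd (2*j+2) q) = (if q < 2*j+1 then 0 else if q = 2*j+1 then -1 else 1)" for q
  proof -
    have "real (dd (2*j+1) q) - real (dd (2*j+2) q) = real_of_int (int (dd (2*j+1) q) - int (dd (2*j+2) q))" by simp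
    then show ?thesis unfolding coef3 by simp
  qed
  have "\<rho> * (X (2*j+1) - X (2*j+2)) = \<rho> * (x (Wv j) - x (Vv (Suc j)))"
    using X_pos[OF V1(1)] X_pos[OF V1(2)] by simp
  also have "\<dots> = (\<Sum>q<M. (if q < 2*j+1 then 0 else if q = 2*j+1 then -1 else 1) * X q)"
    using diff_eq[OF V1] c by simp
  also have "\<dots> = T - P (2*j+2) - X (2*j+1)"
  proof -
    have k: "2*j+1 < M" using I_sub[OF assms] by simp
    show ?thesis using step_sum[OF k, of 0 "-1" 1 X] unfolding P_def by simp
  qed
  finally show ?thesis .
qed

lemma rho_pos: "\<rho> > 0"
proof -
  have V1: "Vv 1 \<in> V" "Vv 2 \<in> V" using l_ge by (auto simp: Vv_in_V)
  have "(\<Sum>w\<in>V. real (dd (pos (Vv 1)) (pos w)) * x w) \<ge> real (dd (pos (Vv 1)) (pos (Vv 2))) * x (Vv 2)"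
    by (rule member_le_sum) (use V1 finite_V in \<open>auto intro!: mult_nonneg_nonneg simp: less_imp_le[OF xpos]\<close>)
  moreover have "real (dd (pos (Vv 1)) (pos (Vv 2))) * x (Vv 2) > 0"
    using V1 xpos by (simp add: dd_def)
  ultimately have "\<rho> * x (Vv 1) > 0" using eig[OF V1(1)] by linarith
  then show ?thesis using xpos[OF V1(1)] by (simp add: zero_less_mult_iff)
qed

end


lemma sgn_facts:
  fixes r t C :: real
  assumes "r > 0" "r * t = C"
  shows "C \<ge> 0 \<Longrightarrow> t \<ge> 0" "C > 0 \<Longrightarrow> t > 0" "C \<le> 0 \<Longrightarrow> t \<le> 0" "C < 0 \<Longrightarrow> t < 0"
  using assms by (auto simp: zero_le_mult_iff zero_less_mult_iff mult_le_0_iff mult_less_0_iff)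

context TX
begin

abbreviation "N \<equiv> 2*l+2"

definition f :: "nat \<Rightarrow> real" where "f i = X (2*i) - X (2*l+2 - 2*i)"
definition h :: "nat \<Rightarrow> real" where "h i = X (2*l+2 - 2*i - 1) - X (2*i+1)"
definition F :: "nat \<Rightarrow> real" where "F i = T - P (2*l+2 - 2*i) - P (2*i+1)"

lemma X_Vv: "X (2*j) = (if 1 \<le> j \<and> j \<le> l then x (Vv j) else 0)"
  unfolding X_def vert_def by (simp add: Vv_in_V)

lemma X_Wv: "X (2*j+1) = (if j \<in> I then x (Wv j) else 0)"
  unfolding X_def vert_def by (simp add: Wv_in_V)

lemma R1:
  assumes "Suc k \<le> l"
  shows "F (Suc k) = F k - f (Suc k) + h k"
proof -
  define m where "m = 2*l+2 - 2*Suc k"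
  have e1: "2*l+2 - 2*k = Suc (Suc m)" using assms unfolding m_def by simp
  have e2: "2*l+2 - 2*k - 1 = Suc m" using assms unfolding m_def by simp
  have e3: "2*Suc k + 1 = Suc (Suc (2*k+1))" by simp
  have e4: "2 * Suc k = Suc (2*k+1)" by simp
  show ?thesis unfolding F_def f_def h_def e1 e2 e3 m_def[symmetric]
    by (simp add: P_Suc e4)
qed

lemma R2:
  assumes "1 \<le> i" "i < l"
  shows "\<rho> * (f i - f (Suc i)) = 2 * F i + h i"
proof -
  define a2 where "a2 = 2*l+2 - 2*Suc i"
  define a3 where "a3 = 2*l+2 - 2*i"
  define a4 where "a4 = 2*l+2 - 2*i - 1"
  have A: "\<rho> * (X (2*i) - X (2*i+2)) = (T - P (2*i+2)) - P (2*i+1)" using E1 assms by blast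
  have B0: "\<rho> * (X (2*(l-i)) - X (2*(l-i)+2)) = (T - P (2*(l-i)+2)) - P (2*(l-i)+1)"
    using E1[of "l-i"] assms by simp
  have q1: "2*(l-i) = a2" using assms unfolding a2_def by auto
  have q2: "a2 + 2 = a3" "a2 + 1 = a4" using assms unfolding a2_def a3_def a4_def by auto
  have B: "\<rho> * (X a2 - X a3) = (T - P a3) - P a4" using B0 unfolding q1 q2 .
  have Pa3: "P a3 = P a4 + X a4"
  proof -
    have "a3 = Suc a4" using assms unfolding a3_def a4_def by simp
    then show ?thesis by (simp add: P_Suc)
  qed
  have P2: "P (2*i+2) = P (2*i+1) + X (2*i+1)"
  proof -
    have "2*i+2 = Suc (2*i+1)" by simp
    then show ?thesis by (simp only: P_Suc)
  qed
  have fi: "f i = X (2*i) - X a3" unfolding f_def a3_def by simp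
  have fs: "f (Suc i) = X (2*i+2) - X a2" unfolding f_def a2_def by simp
  have hi: "h i = X a4 - X (2*i+1)" unfolding h_def a4_def by simp
  have Fi: "F i = T - P a3 - P (2*i+1)" unfolding F_def a3_def by simp
  have "\<rho> * (f i - f (Suc i)) = \<rho> * (X (2*i) - X (2*i+2)) + \<rho> * (X a2 - X a3)"
    unfolding fi fs by (simp add: algebra_simps)
  then show ?thesis using A B Pa3 P2 hi Fi by linarith
qed

lemma R3:
  assumes "1 \<le> j" "j \<le> a"
  shows "\<rho> * (h j + f j) = F j - h j"
proof -
  have jI: "j \<in> I" using assms unfolding I_eq by simp
  have ljI: "l - j \<in> I" using assms hb l_ge unfolding I_eq by auto
  have A: "\<rho> * (X (2*j+1) - X (2*j)) = P (2*j+1) - X (2*j+1)" using E2[OF jI] .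
  define a3 where "a3 = 2*l+2 - 2*j"
  define a4 where "a4 = 2*l+2 - 2*j - 1"
  have q1: "2*(l-j)+2 = a3" "2*(l-j)+1 = a4" using assms l_ge unfolding a3_def a4_def by auto
  have B: "\<rho> * (X a4 - X a3) = T - P a3 - X a4" using E3[OF ljI] unfolding q1 .
  have fi: "f j = X (2*j) - X a3" unfolding f_def a3_def by simp
  have hi: "h j = X a4 - X (2*j+1)" unfolding h_def a4_def by simp
  have Fi: "F j = T - P a3 - P (2*j+1)" unfolding F_def a3_def by simp
  have "\<rho> * (h j + f j) = \<rho> * (X a4 - X a3) - \<rho> * (X (2*j+1) - X (2*j))"
    unfolding fi hi by (simp add: algebra_simps)
  then show ?thesis using A B hi Fi by linarith
qed

lemma R4:
  assumes "a < j" "2*j \<le> l"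
  shows "h j \<ge> 0"
proof -
  have "j \<notin> I" using assms hbl unfolding I_eq by auto
  then have "X (2*j+1) = 0" using X_Wv[of j] by simp
  then show ?thesis unfolding h_def using X_nonneg by simp
qed

lemma R4s: "h (a+1) > 0"
proof -
  have "a+1 \<notin> I" using hb hbl unfolding I_eq by auto
  then have "X (2*(a+1)+1) = 0" by (simp only: X_Wv) simp
  moreover have e: "2*l+2 - 2*(a+1) - 1 = 2*(l-a-1)+1" using l_ge by simp
  moreover have "l-a-1 \<in> I" using hb l_ge unfolding I_eq by auto
  ultimately show ?thesis unfolding h_def e X_Wv using xpos Wv_in_V by simp
qed

lemma h0: "h 0 = 0"
proof -
  have "l \<notin> I" using I_sub by auto
  moreover have "0 \<notin> I" using I_sub by fastforce
  moreover have "2*l+2 - 2*0 - 1 = 2*l+1" by simp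
  ultimately show ?thesis unfolding h_def using X_Wv[of l] X_Wv[of 0] by simp
qed

lemma F0: "F 0 = 0"
proof -
  have "X (2*(l+1)) = 0" by (simp only: X_Vv) simp
  moreover have "X (2*0) = 0" by (simp only: X_Vv) simp
  moreover have "T = P (2*l+2) + X (2*l+2)"
  proof -
    have "2*l+3 = Suc (2*l+2)" by simp
    then show ?thesis by (simp only: P_Suc)
  qed
  moreover have "P 1 = X 0" unfolding P_def by simp
  ultimately show ?thesis unfolding F_def by simp
qed

abbreviation "p \<equiv> l div 2"

lemma p_facts: "a + 2 \<le> p" "p < l" "2*p \<le> l" "1 \<le> p"
  using hb hbl l_ge by auto

lemma R6: "f p \<le> 0 \<Longrightarrow> F p \<le> 0" "f p < 0 \<Longrightarrow> F p < 0"
proof -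
  have R: "\<rho> * (f p - f (Suc p)) = 2 * F p + h p" using R2 p_facts by simp
  have hp: "h p \<ge> 0" using R4 p_facts by simp
  have "\<exists>c. c > 0 \<and> f p - f (Suc p) = c * f p"
  proof (cases "even l")
    case True
    then have e: "2*l+2 - 2*Suc p = 2*p" "2*l+2 - 2*p = 2*p+2" by auto
    have "f (Suc p) = - f p" unfolding f_def e by simp
    then show ?thesis by (intro exI[of _ 2]) simp
  next
    case False
    then have e: "2*l+2 - 2*Suc p = 2*Suc p" by presburger
    have "f (Suc p) = 0" unfolding f_def e by simp
    then show ?thesis by (intro exI[of _ 1]) simp
  qed
  then obtain c where c: "c > 0" "f p - f (Suc p) = c * f p" by blast
  have Rc: "(\<rho> * c) * f p = 2 * F p + h p" using R c by (simp add: algebra_simps)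
  have rc: "\<rho> * c > 0" using rho_pos c by simp
  show "f p \<le> 0 \<Longrightarrow> F p \<le> 0"
  proof -
    assume "f p \<le> 0"
    then have "(\<rho> * c) * f p \<le> 0" using rc by (simp add: mult_le_0_iff)
    then show ?thesis using Rc hp by linarith
  qed
  show "f p < 0 \<Longrightarrow> F p < 0"
  proof -
    assume "f p < 0"
    then have "(\<rho> * c) * f p < 0" using rc by (simp add: mult_less_0_iff)
    then show ?thesis using Rc hp by linarith
  qed
qed

lemma h_sign:
  assumes "1 \<le> j" "j \<le> a"
  shows "f j \<le> 0 \<Longrightarrow> F j \<ge> 0 \<Longrightarrow> h j \<ge> 0" "f j > 0 \<Longrightarrow> F j \<le> 0 \<Longrightarrow> h j < 0"
proof -
  have e: "(\<rho> + 1) * h j = F j - \<rho> * f j" using R3[OF assms] by (simp add: algebra_simps)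
  have r1: "\<rho> + 1 > 0" using rho_pos by simp
  show "f j \<le> 0 \<Longrightarrow> F j \<ge> 0 \<Longrightarrow> h j \<ge> 0"
  proof -
    assume "f j \<le> 0" "F j \<ge> 0"
    then have "\<rho> * f j \<le> 0" using rho_pos by (simp add: mult_le_0_iff)
    then show ?thesis using sgn_facts(1)[OF r1 e] \<open>F j \<ge> 0\<close> by linarith
  qed
  show "f j > 0 \<Longrightarrow> F j \<le> 0 \<Longrightarrow> h j < 0"
  proof -
    assume "f j > 0" "F j \<le> 0"
    then have "\<rho> * f j > 0" using rho_pos by simp
    then show ?thesis using sgn_facts(4)[OF r1 e] \<open>F j \<le> 0\<close> by linarith
  qed
qed

lemma h_nonneg_any:
  assumes "1 \<le> j" "j \<le> p" "f j \<le> 0" "F j \<ge> 0"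
  shows "h j \<ge> 0"
proof (cases "j \<le> a")
  case True then show ?thesis using h_sign(1) assms by simp
next
  case False then show ?thesis using R4 assms by simp
qed

lemma indA:
  assumes f1: "f 1 \<le> 0"
  shows "Suc k \<le> p \<Longrightarrow> f (Suc k) \<le> 0 \<and> F (Suc k) \<ge> 0 \<and> h (Suc k) \<ge> 0 \<and>
           (a + 2 \<le> Suc k \<longrightarrow> f (Suc k) < 0 \<and> F (Suc k) > 0)"
proof (induction k)
  case 0
  have "F 1 = F 0 - f 1 + h 0" using R1[of 0] p_facts by simp
  then have F1: "F 1 \<ge> 0" using F0 h0 f1 by simp
  then show ?case using f1 h_nonneg_any[of 1] p_facts by simp
next
  case (Suc k)
  define i where "i = Suc k"
  have ip: "Suc i \<le> p" using Suc.prems unfolding i_def .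
  have IH: "f i \<le> 0" "F i \<ge> 0" "h i \<ge> 0" "a + 2 \<le> i \<longrightarrow> f i < 0 \<and> F i > 0"
    using Suc.IH ip unfolding i_def by auto
  have R: "\<rho> * (f i - f (Suc i)) = 2 * F i + h i" using R2[of i] ip p_facts unfolding i_def by simp
  have RF: "F (Suc i) = F i - f (Suc i) + h i" using R1[of i] ip p_facts by simp
  have d: "f (Suc i) \<le> f i" using sgn_facts(1)[OF rho_pos R] IH by simp
  have fS: "f (Suc i) \<le> 0" using d IH by simp
  have FS: "F (Suc i) \<ge> 0" using RF IH fS by simp
  have hS: "h (Suc i) \<ge> 0" using h_nonneg_any[of "Suc i"] ip fS FS by simp
  have strict: "f (Suc i) < 0 \<and> F (Suc i) > 0" if "a + 2 \<le> Suc i"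
  proof -
    have "F i > 0 \<or> h i > 0"
    proof (cases "i = a + 1")
      case True then show ?thesis using R4s by simp
    next
      case False then show ?thesis using IH that by simp
    qed
    then have "2 * F i + h i > 0" using IH by linarith
    then have "f (Suc i) < f i" using sgn_facts(2)[OF rho_pos R] by simp
    then show ?thesis using IH RF by linarith
  qed
  show ?case using fS FS hS strict unfolding i_def by simp
qed

lemma f1_pos: "f 1 > 0"
proof (rule ccontr)
  assume "\<not> f 1 > 0"
  then have "f 1 \<le> 0" by simp
  from indA[OF this, of "p - 1"] p_facts have "f p < 0" "F p > 0" by auto
  with R6(2) show False by fastforce
qed

lemma indB:
  "Suc k \<le> a + 1 \<Longrightarrow> f (Suc k) > 0 \<and> F (Suc k) \<le> 0 \<and> (Suc k \<le> a \<longrightarrow> h (Suc k) < 0)"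
proof (induction k)
  case 0
  have "F 1 = F 0 - f 1 + h 0" using R1[of 0] p_facts by simp
  then have F1: "F 1 \<le> 0" using F0 h0 f1_pos by simp
  then show ?case using f1_pos h_sign(2)[of 1] by simp
next
  case (Suc k)
  define i where "i = Suc k"
  have ip: "Suc i \<le> a + 1" using Suc.prems unfolding i_def .
  have IH: "f i > 0" "F i \<le> 0" "h i < 0"
    using Suc.IH ip unfolding i_def by auto
  have R: "\<rho> * (f i - f (Suc i)) = 2 * F i + h i" using R2[of i] ip p_facts unfolding i_def by simp
  have RF: "F (Suc i) = F i - f (Suc i) + h i" using R1[of i] ip p_facts by simp
  have d: "f i < f (Suc i)" using sgn_facts(4)[OF rho_pos R] IH by simp
  have fS: "f (Suc i) > 0" using d IH by simp
  have FS: "F (Suc i) \<le> 0" using RF IH fS by simp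
  have hS: "Suc i \<le> a \<longrightarrow> h (Suc i) < 0" using h_sign(2)[of "Suc i"] fS FS by simp
  show ?case using fS FS hS unfolding i_def by simp
qed

lemma indC:
  assumes fp: "f p \<le> 0"
  shows "k + a + 1 \<le> p \<Longrightarrow> f (p - k) \<le> 0 \<and> F (p - k) \<le> 0"
proof (induction k)
  case 0
  then show ?case using fp R6(1) by simp
next
  case (Suc k)
  define i where "i = p - Suc k"
  have iS: "Suc i = p - k" using Suc.prems unfolding i_def by simp
  have ia: "a < i" "1 \<le> i" "i < l" "2*i \<le> l" using Suc.prems p_facts unfolding i_def by auto
  have IH: "f (Suc i) \<le> 0" "F (Suc i) \<le> 0" using Suc.IH Suc.prems unfolding iS by auto
  have hi: "h i \<ge> 0" using R4 ia by simp
  have R: "\<rho> * (f i - f (Suc i)) = 2 * F i + h i" using R2 ia by simp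
  have RF: "F (Suc i) = F i - f (Suc i) + h i" using R1[of i] ia by simp
  have Fi: "F i \<le> 0" using RF IH hi by linarith
  have "2 * F i + h i \<le> 0" using RF IH hi by linarith
  then have "f i \<le> f (Suc i)" using sgn_facts(3)[OF rho_pos R] by simp
  then show ?case using Fi IH unfolding i_def[symmetric] by simp
qed

lemma fp_pos: "f p > 0"
proof (rule ccontr)
  assume "\<not> f p > 0"
  then have "f p \<le> 0" by simp
  from indC[OF this, of "p - a - 1"] p_facts have "f (a+1) \<le> 0"
    by (simp add: Suc_diff_Suc numeral_2_eq_2)
  moreover have "f (a+1) > 0" using indB[of a] by simp
  ultimately show False by simp
qed

end


lemma ceil_half: "nat \<lceil>real l / 2\<rceil> = l - l div 2"
proof (cases "even l")
  case True
  then obtain k where k: "l = 2*k" by (auto elim: evenE)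
  then show ?thesis by simp
next
  case False
  then obtain k where k: "l = 2*k+1" by (auto elim: oddE)
  have "\<lceil>real l / 2\<rceil> = int k + 1"
    unfolding ceiling_eq_iff k by simp
  then show ?thesis using k by simp
qed

context TX
begin

lemma f_x: "1 \<le> i \<Longrightarrow> i \<le> l \<Longrightarrow> f i = x (Vv i) - x (Vv (l+1-i))"
proof -
  assume i: "1 \<le> i" "i \<le> l"
  have e: "2*l+2 - 2*i = 2*(l+1-i)" by simp
  have c: "1 \<le> l+1-i" "l+1-i \<le> l" using i by auto
  have "X (2*(l+1-i)) = x (Vv (l+1-i))" using X_Vv[of "l+1-i"] c by presburger
  moreover have "X (2*i) = x (Vv i)" using X_Vv[of i] i by simp
  ultimately show ?thesis unfolding f_def e by simp
qed

lemma h_x: "1 \<le> i \<Longrightarrow> i \<le> a \<Longrightarrow> h i = x (Wv (l-i)) - x (Wv i)"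
proof -
  assume i: "1 \<le> i" "i \<le> a"
  have e: "2*l+2 - 2*i - 1 = 2*(l-i)+1" using i l_ge by simp
  have "i \<in> I" "l - i \<in> I" using i hb l_ge unfolding I_eq by auto
  then show ?thesis unfolding h_def e using X_Wv[of i] X_Wv[of "l-i"] by simp
qed

lemma main:
  "x (Vv p) > x (Vv (l+1-p)) \<and>
   (\<forall>i\<in>{1..a}. x (Vv i) > x (Vv (l+1-i)) \<and> x (Wv i) > x (Wv (l-i))) \<and>
   x (Vv (a+1)) > x (Vv (l-a))"
proof -
  have A: "x (Vv p) > x (Vv (l+1-p))" using fp_pos f_x p_facts by simp
  have B: "x (Vv i) > x (Vv (l+1-i)) \<and> x (Wv i) > x (Wv (l-i))" if "i \<in> {1..a}" for i
  proof -
    have s: "Suc (i-1) \<le> a+1" "Suc (i-1) = i" "Suc (i-1) \<le> a" using that by auto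
    have "f i > 0" "h i < 0" using indB[OF s(1)] s(3) unfolding s(2) by auto
    then show ?thesis using f_x[of i] h_x[of i] that l_ge by simp
  qed
  have C: "x (Vv (a+1)) > x (Vv (l-a))"
  proof -
    have "f (a+1) > 0" using indB[of a] by simp
    moreover have "l + 1 - (a+1) = l - a" by simp
    ultimately show ?thesis using f_x[of "a+1"] l_ge by simp
  qed
  show ?thesis using A B C by blast
qed

end

theorem lemma3p2:
  fixes n a b :: nat and x :: "tvtx \<Rightarrow> real"
  defines "l \<equiv> Tlen n a b"
  assumes hb: "b \<ge> a + 2"
    and hn: "2 * (a + b) < n - 1"
    and hbl: "real b < real l / 2"
    and hx: "dist_perron_vector (T_verts n a b) (T_edges n a b) x"
  shows "x (Vv (l div 2)) > x (Vv (nat \<lceil>real l / 2\<rceil> + 1)) \<and>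
         (a \<ge> 1 \<longrightarrow> (\<forall>i\<in>{1..a}. x (Vv i) > x (Vv (l + 1 - i)) \<and> x (Wv i) > x (Wv (l - i)))) \<and>
         x (Vv (a + 1)) > x (Vv (l - a))"
proof -
  have hb2: "2*b < Tlen n a b"
  proof -
    have "real (2*b) < real l" using hbl by simp
    then show ?thesis unfolding l_def by linarith
  qed
  have tx: "TX n a b x" unfolding TX_def TX_axioms_def TT_def using hb hb2 hx by simp
  have M: "x (Vv (Tlen n a b div 2)) > x (Vv (Tlen n a b + 1 - Tlen n a b div 2)) \<and>
   (\<forall>i\<in>{1..a}. x (Vv i) > x (Vv (Tlen n a b+1-i)) \<and> x (Wv i) > x (Wv (Tlen n a b-i))) \<and>
   x (Vv (a+1)) > x (Vv (Tlen n a b-a))" using TX.main[OF tx] .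
  have c: "nat \<lceil>real (Tlen n a b) / 2\<rceil> + 1 = Tlen n a b + 1 - Tlen n a b div 2" unfolding ceil_half by simp
  show ?thesis using M unfolding c l_def by blast
qed

end
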